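(* Let $V \subset \mathbb{R}^D$ be a finite set of points in general position (all pairwise Euclidean distances distinct), with Euclidean distance $d$, and let $\alpha: V \to \mathbb{R}$ satisfy $\alpha(u) \ge 1$ for all $u \in V$. Let $E_{EMST}$ be the edge set of the Euclidean minimum spanning tree of $V$, let $E_{RNG}$ be the edge set of the relative neighborhood graph of $V$, and let $E_{MCGI}$ be the edge set of the graph $G_{MCGI}$ on $V$ defined below. Then $E_{EMST} \subseteq E_{RNG} \subseteq E_{MCGI}$, and consequently $G_{MCGI}$ is connected.
   Context: Relative neighborhood graph: $\{u,v\}$ (with $u \ne v$) is an edge of $E_{RNG}$ iff there is no witness $n \in V\setminus\{u,v\}$ with $d(n,v) \le d(u,v)$ and $d(n,u) \le d(u,v)$. MCGI graph (the paper's adaptive pruning rule): for $u \ne v$, the edge $(u,v)$ belongs to $E_{MCGI}$ iff it is not pruned, where $(u,v)$ is pruned iff there exists a witness $n \in V\setminus\{u,v\}$ with $d(n,u) \le d(u,v)$ (i.e. $n$ is no farther from $u$ than $v$) and $\alpha(u)\, d(n,v) \le d(u,v)$. An undirected edge $\{u,v\}$ is regarded as contained in $E_{MCGI}$ if $(u,v)$ or $(v,u)$ is in $E_{MCGI}$, and connectivity of $G_{MCGI}$ refers to the underlying undirected graph. *)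

theory Defs
  imports "HOL-Analysis.Analysis"
begin

text \<open>Points live in an arbitrary Euclidean space 'a (playing the role of R^D).
  Undirected edges are represented as two-element sets {u,v}.\<close>

definition all_pairs :: "'a set \<Rightarrow> 'a set set" where
  "all_pairs V = {{u, v} | u v. u \<in> V \<and> v \<in> V \<and> u \<noteq> v}"

definition general_position :: "'a::metric_space set \<Rightarrow> bool" where
  "general_position V \<longleftrightarrow>
     (\<forall>u\<in>V. \<forall>v\<in>V. \<forall>x\<in>V. \<forall>y\<in>V.
        u \<noteq> v \<longrightarrow> x \<noteq> y \<longrightarrow> dist u v = dist x y \<longrightarrow> {u, v} = {x, y})"

definition edge_rel :: "'a set set \<Rightarrow> ('a \<times> 'a) set" where
  "edge_rel E = {(x, y). {x, y} \<in> E}"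

definition graph_connected :: "'a set \<Rightarrow> 'a set set \<Rightarrow> bool" where
  "graph_connected V E \<longleftrightarrow> (\<forall>u\<in>V. \<forall>v\<in>V. (u, v) \<in> (edge_rel E)\<^sup>*)"

definition spanning_tree :: "'a set \<Rightarrow> 'a set set \<Rightarrow> bool" where
  "spanning_tree V T \<longleftrightarrow> T \<subseteq> all_pairs V \<and> graph_connected V T \<and>
     (\<forall>e\<in>T. \<not> graph_connected V (T - {e}))"

definition edge_len :: "'a::metric_space set \<Rightarrow> real" where
  "edge_len e = (THE d. \<exists>u v. e = {u, v} \<and> d = dist u v)"

definition tree_weight :: "'a::metric_space set set \<Rightarrow> real" where
  "tree_weight T = (\<Sum>e\<in>T. edge_len e)"

definition is_emst :: "'a::metric_space set \<Rightarrow> 'a set set \<Rightarrow> bool" where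
  "is_emst V T \<longleftrightarrow> spanning_tree V T \<and>
     (\<forall>T'. spanning_tree V T' \<longrightarrow> tree_weight T \<le> tree_weight T')"

definition rng_edges :: "'a::metric_space set \<Rightarrow> 'a set set" where
  "rng_edges V = {{u, v} | u v. u \<in> V \<and> v \<in> V \<and> u \<noteq> v \<and>
     \<not> (\<exists>n \<in> V - {u, v}. dist n v \<le> dist u v \<and> dist n u \<le> dist u v)}"

definition mcgi_pruned :: "'a::metric_space set \<Rightarrow> ('a \<Rightarrow> real) \<Rightarrow> 'a \<Rightarrow> 'a \<Rightarrow> bool" where
  "mcgi_pruned V \<alpha> u v \<longleftrightarrow>
     (\<exists>n \<in> V - {u, v}. dist n u \<le> dist u v \<and> \<alpha> u * dist n v \<le> dist u v)"

definition mcgi_arc :: "'a::metric_space set \<Rightarrow> ('a \<Rightarrow> real) \<Rightarrow> 'a \<Rightarrow> 'a \<Rightarrow> bool" where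
  "mcgi_arc V \<alpha> u v \<longleftrightarrow> u \<in> V \<and> v \<in> V \<and> u \<noteq> v \<and> \<not> mcgi_pruned V \<alpha> u v"

definition mcgi_edges :: "'a::metric_space set \<Rightarrow> ('a \<Rightarrow> real) \<Rightarrow> 'a set set" where
  "mcgi_edges V \<alpha> = {{u, v} | u v. mcgi_arc V \<alpha> u v \<or> mcgi_arc V \<alpha> v u}"

end

theory Submission
  imports Defs
begin

lemma edge_len_pair: "edge_len {x, y} = dist x y"
proof -
  have "(\<exists>a b. {x, y} = {a, b} \<and> d = dist a b) \<longleftrightarrow> d = dist x y" for d
    by (auto simp: doubleton_eq_iff dist_commute)
  then show ?thesis unfolding edge_len_def by simp
qed

lemma finite_all_pairs: "finite V \<Longrightarrow> finite (all_pairs V)"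
proof -
  assume "finite V"
  have "all_pairs V \<subseteq> (\<lambda>(u,v). {u,v}) ` (V \<times> V)"
    unfolding all_pairs_def by auto
  then show ?thesis using \<open>finite V\<close> by (meson finite_SigmaI finite_imageI finite_subset)
qed

lemma edge_len_nonneg: "e \<in> all_pairs V \<Longrightarrow> edge_len e \<ge> 0"
  unfolding all_pairs_def by (auto simp: edge_len_pair)

lemma edge_rel_mono: "A \<subseteq> B \<Longrightarrow> (edge_rel A)\<^sup>* \<subseteq> (edge_rel B)\<^sup>*"
  by (rule rtrancl_mono) (auto simp: edge_rel_def)

lemma rng_conn:
  assumes fin: "finite V" and gp: "general_position V"
  shows "u \<in> V \<Longrightarrow> v \<in> V \<Longrightarrow> (u, v) \<in> (edge_rel (rng_edges V))\<^sup>*"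
proof (induction "card {p \<in> V \<times> V. dist (fst p) (snd p) < dist u v}" arbitrary: u v rule: less_induct)
  case less
  show ?case
  proof (cases "u = v")
    case True then show ?thesis by simp
  next
    case neq: False
    show ?thesis
    proof (cases "{u, v} \<in> rng_edges V")
      case True then show ?thesis by (auto simp: edge_rel_def)
    next
      case False
      then obtain n where n: "n \<in> V - {u, v}" "dist n v \<le> dist u v" "dist n u \<le> dist u v"
        using less.prems neq unfolding rng_edges_def by blast
      have "dist n v \<noteq> dist u v"
        using gp n less.prems neq unfolding general_position_def
        by (metis Diff_iff doubleton_eq_iff insertCI)
      hence nv: "dist n v < dist u v" using n by simp
      have "dist u n \<noteq> dist u v"
        using gp n less.prems neq unfolding general_position_def
        by (metis Diff_iff doubleton_eq_iff insertCI)
      hence un: "dist u n < dist u v" using n by (simp add: dist_commute)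
      have fs: "finite {p \<in> V \<times> V. dist (fst p) (snd p) < dist u v}" using fin by simp
      have c1: "card {p \<in> V \<times> V. dist (fst p) (snd p) < dist u n}
               < card {p \<in> V \<times> V. dist (fst p) (snd p) < dist u v}"
      proof (rule psubset_card_mono[OF fs])
        have "(u, n) \<in> {p \<in> V \<times> V. dist (fst p) (snd p) < dist u v}" using un n less.prems by auto
        moreover have "(u, n) \<notin> {p \<in> V \<times> V. dist (fst p) (snd p) < dist u n}" by auto
        moreover have "{p \<in> V \<times> V. dist (fst p) (snd p) < dist u n}
               \<subseteq> {p \<in> V \<times> V. dist (fst p) (snd p) < dist u v}" using un by auto
        ultimately show "{p \<in> V \<times> V. dist (fst p) (snd p) < dist u n}
               \<subset> {p \<in> V \<times> V. dist (fst p) (snd p) < dist u v}" by blast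
      qed
      have c2: "card {p \<in> V \<times> V. dist (fst p) (snd p) < dist n v}
               < card {p \<in> V \<times> V. dist (fst p) (snd p) < dist u v}"
      proof (rule psubset_card_mono[OF fs])
        have "(n, v) \<in> {p \<in> V \<times> V. dist (fst p) (snd p) < dist u v}" using nv n less.prems by auto
        moreover have "(n, v) \<notin> {p \<in> V \<times> V. dist (fst p) (snd p) < dist n v}" by auto
        moreover have "{p \<in> V \<times> V. dist (fst p) (snd p) < dist n v}
               \<subseteq> {p \<in> V \<times> V. dist (fst p) (snd p) < dist u v}" using nv by auto
        ultimately show "{p \<in> V \<times> V. dist (fst p) (snd p) < dist n v}
               \<subset> {p \<in> V \<times> V. dist (fst p) (snd p) < dist u v}" by blast
      qed
      have "(u, n) \<in> (edge_rel (rng_edges V))\<^sup>*" using less.hyps[OF c1] less.prems n by auto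
      moreover have "(n, v) \<in> (edge_rel (rng_edges V))\<^sup>*" using less.hyps[OF c2] less.prems n by auto
      ultimately show ?thesis by (rule rtrancl_trans)
    qed
  qed
qed

lemma rng_sub_mcgi:
  assumes "\<forall>u\<in>V. \<alpha> u \<ge> 1"
  shows "rng_edges V \<subseteq> mcgi_edges V \<alpha>"
proof
  fix e assume "e \<in> rng_edges V"
  then obtain u v where e: "e = {u, v}" "u \<in> V" "v \<in> V" "u \<noteq> v"
    and nw: "\<not> (\<exists>n \<in> V - {u, v}. dist n v \<le> dist u v \<and> dist n u \<le> dist u v)"
    unfolding rng_edges_def by blast
  have "\<not> mcgi_pruned V \<alpha> u v"
  proof
    assume "mcgi_pruned V \<alpha> u v"
    then obtain n where n: "n \<in> V - {u, v}" "dist n u \<le> dist u v" "\<alpha> u * dist n v \<le> dist u v"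
      unfolding mcgi_pruned_def by blast
    have "\<alpha> u \<ge> 1" using assms e by auto
    hence "dist n v \<le> \<alpha> u * dist n v"
      by (metis mult_le_cancel_right1 zero_le_dist linorder_not_le order_less_le_trans zero_less_one)
    then have "dist n v \<le> dist u v" using n by linarith
    then show False using nw n by auto
  qed
  then have "mcgi_arc V \<alpha> u v" using e unfolding mcgi_arc_def by blast
  then show "e \<in> mcgi_edges V \<alpha>" unfolding mcgi_edges_def using e by blast
qed

lemma reach_split:
  assumes "(u, x) \<in> (edge_rel T)\<^sup>*" "e = {u, v}"
  shows "(u, x) \<in> (edge_rel (T - {e}))\<^sup>* \<or> (v, x) \<in> (edge_rel (T - {e}))\<^sup>*"
  using assms(1)
proof (induction rule: rtrancl_induct)
  case base then show ?case by simp
next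
  case (step y z)
  show ?case
  proof (cases "{y, z} = e")
    case True
    then have "z = u \<or> z = v" using assms(2) by (auto simp: doubleton_eq_iff)
    then show ?thesis by auto
  next
    case False
    then have "(y, z) \<in> edge_rel (T - {e})" using step.hyps(2) by (auto simp: edge_rel_def)
    then show ?thesis using step.IH by (meson rtrancl.rtrancl_into_rtrancl)
  qed
qed

lemma min_spanning_sub:
  assumes "finite T'" "T' \<subseteq> all_pairs V" "graph_connected V T'"
  obtains S where "S \<subseteq> T'" "spanning_tree V S"
proof -
  let ?P = "\<lambda>S. S \<subseteq> T' \<and> graph_connected V S"
  obtain S where S: "?P S" "\<forall>S'. ?P S' \<longrightarrow> card S \<le> card S'"
    using ex_has_least_nat[of ?P T' card] assms by blast
  have fS: "finite S" using S assms finite_subset by blast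
  have "\<not> graph_connected V (S - {e})" if "e \<in> S" for e
  proof
    assume "graph_connected V (S - {e})"
    then have "card S \<le> card (S - {e})" using S by blast
    moreover have "card (S - {e}) < card S" using fS that by (rule card_Diff1_less)
    ultimately show False by simp
  qed
  then have "spanning_tree V S" unfolding spanning_tree_def using S assms by blast
  then show ?thesis using that S by blast
qed

lemma emst_sub_rng:
  assumes fin: "finite V" and gp: "general_position V" and T: "is_emst V T"
  shows "T \<subseteq> rng_edges V"
proof
  fix e assume eT: "e \<in> T"
  have Tsub: "T \<subseteq> all_pairs V" and Tc: "graph_connected V T"
    using T unfolding is_emst_def spanning_tree_def by auto
  have fT: "finite T" using Tsub finite_all_pairs[OF fin] finite_subset by blast
  obtain u v where e: "e = {u, v}" "u \<in> V" "v \<in> V" "u \<noteq> v"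
    using Tsub eT unfolding all_pairs_def by blast
  show "e \<in> rng_edges V"
  proof (rule ccontr)
    assume "e \<notin> rng_edges V"
    then obtain n where n: "n \<in> V - {u, v}" "dist n v \<le> dist u v" "dist n u \<le> dist u v"
      using e unfolding rng_edges_def by blast
    have "dist n v \<noteq> dist u v"
      using gp n e unfolding general_position_def
      by (metis Diff_iff doubleton_eq_iff insertCI)
    hence nv: "dist n v < dist u v" using n by simp
    have "dist n u \<noteq> dist u v"
      using gp n e unfolding general_position_def
      by (metis Diff_iff doubleton_eq_iff insertCI)
    hence nu: "dist n u < dist u v" using n by simp
    have "(u, n) \<in> (edge_rel T)\<^sup>*" using Tc e n unfolding graph_connected_def by blast
    from reach_split[OF this e(1)]
    obtain a b where ab: "(a, n) \<in> (edge_rel (T - {e}))\<^sup>*" "e = {a, b}" "dist n b < dist a b"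
    proof
      assume "(u, n) \<in> (edge_rel (T - {e}))\<^sup>*"
      then show ?thesis using that[of u v] nv e by simp
    next
      assume "(v, n) \<in> (edge_rel (T - {e}))\<^sup>*"
      then show ?thesis using that[of v u] nu e by (simp add: insert_commute dist_commute)
    qed
    define f where "f = {n, b}"
    define T' where "T' = (T - {e}) \<union> {f}"
    have ab2: "a \<in> V" "b \<in> V" "n \<noteq> b" "n \<in> V" using ab(2) e n by (auto simp: doubleton_eq_iff)
    have fall: "f \<in> all_pairs V" unfolding f_def all_pairs_def using ab2 by blast
    have T'sub: "T' \<subseteq> all_pairs V" using Tsub fall unfolding T'_def by blast
    have fT': "finite T'" using fT unfolding T'_def by simp
    have sub1: "(edge_rel (T - {e}))\<^sup>* \<subseteq> (edge_rel T')\<^sup>*"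
      by (rule edge_rel_mono) (auto simp: T'_def)
    have "(a, b) \<in> (edge_rel T')\<^sup>*"
    proof -
      have "(a, n) \<in> (edge_rel T')\<^sup>*" using ab sub1 by blast
      moreover have "(n, b) \<in> edge_rel T'" unfolding edge_rel_def T'_def f_def by simp
      ultimately show ?thesis by simp
    qed
    have sym': "(edge_rel T')\<^sup>* = ((edge_rel T')\<^sup>*)\<inverse>"
    proof -
      have "edge_rel T' = (edge_rel T')\<inverse>" by (auto simp: edge_rel_def insert_commute)
      then show ?thesis by (metis rtrancl_converse)
    qed
    have "(b, a) \<in> (edge_rel T')\<^sup>*" using \<open>(a, b) \<in> _\<close> sym' by blast
    have "edge_rel T \<subseteq> (edge_rel T')\<^sup>*"
    proof
      fix p assume "p \<in> edge_rel T"
      then obtain x y where p: "p = (x, y)" "{x, y} \<in> T" unfolding edge_rel_def by auto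
      show "p \<in> (edge_rel T')\<^sup>*"
      proof (cases "{x, y} = e")
        case True
        then have "(x = a \<and> y = b) \<or> (x = b \<and> y = a)" using ab(2) by (auto simp: doubleton_eq_iff)
        then show ?thesis using p \<open>(a, b) \<in> _\<close> \<open>(b, a) \<in> _\<close> by auto
      next
        case False
        then have "(x, y) \<in> edge_rel T'" using p unfolding edge_rel_def T'_def by auto
        then show ?thesis using p by auto
      qed
    qed
    then have "(edge_rel T)\<^sup>* \<subseteq> (edge_rel T')\<^sup>*" by (metis rtrancl_subset_rtrancl)
    then have T'c: "graph_connected V T'" using Tc unfolding graph_connected_def by blast
    have lf: "edge_len f < edge_len e" using ab by (simp add: f_def e edge_len_pair)
    have fTe: "finite (T - {e})" using fT by simp
    have w1: "tree_weight T' \<le> tree_weight (T - {e}) + edge_len f"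
    proof (cases "f \<in> T - {e}")
      case True
      then have "T' = T - {e}" unfolding T'_def by auto
      then show ?thesis using edge_len_nonneg[OF fall] by simp
    next
      case False
      then show ?thesis unfolding tree_weight_def T'_def using fTe by simp
    qed
    have w2: "tree_weight (T - {e}) = tree_weight T - edge_len e"
      unfolding tree_weight_def using fT eT by (simp add: sum_diff1)
    obtain S where S: "S \<subseteq> T'" "spanning_tree V S"
      using min_spanning_sub[OF fT' T'sub T'c] by blast
    have "tree_weight S \<le> tree_weight T'"
      unfolding tree_weight_def
      by (rule sum_mono2[OF fT' S(1)]) (use T'sub edge_len_nonneg in blast)
    moreover have "tree_weight T \<le> tree_weight S" using T S(2) unfolding is_emst_def by blast
    ultimately show False using w1 w2 lf by linarith
  qed
qed

theorem mainTheorem3: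
  fixes V :: "'a::euclidean_space set" and \<alpha> :: "'a \<Rightarrow> real"
  assumes "finite V"
    and "general_position V"
    and "\<forall>u\<in>V. \<alpha> u \<ge> 1"
  shows "(\<forall>T. is_emst V T \<longrightarrow> T \<subseteq> rng_edges V)
         \<and> rng_edges V \<subseteq> mcgi_edges V \<alpha>
         \<and> graph_connected V (mcgi_edges V \<alpha>)"
proof (intro conjI allI impI)
  show "\<And>T. is_emst V T \<Longrightarrow> T \<subseteq> rng_edges V" using emst_sub_rng assms by blast
  show sub: "rng_edges V \<subseteq> mcgi_edges V \<alpha>" using rng_sub_mcgi assms by blast
  show "graph_connected V (mcgi_edges V \<alpha>)"
    unfolding graph_connected_def
    using rng_conn[OF assms(1,2)] edge_rel_mono[OF sub] by blast
qed

end
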